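(* Let $k\geq 1$ and $n\geq 2$ be integers. Then $C_{k,n}^2-C_{k,n-1}C_{k,n+1}=-8(k-1)^{n}$.
   Context: For an integer $k\geq 1$, the generalized balancing-Lucas numbers are defined by $C_{k,0}=1$, $C_{k,1}=3$ and $C_{k,n}=3kC_{k,n-1}+(1-k)C_{k,n-2}$ for $n\geq 2$. *)

theory Defs
  imports Main
begin

fun balC :: "int \<Rightarrow> nat \<Rightarrow> int" where
  "balC k 0 = 1"
| "balC k (Suc 0) = 3"
| "balC k (Suc (Suc n)) = 3 * k * balC k (Suc n) + (1 - k) * balC k n"

end

theory Submission
  imports Defs
begin

lemma cass: "(balC k (Suc m))^2 - balC k m * balC k (Suc (Suc m)) = -8 * (k - 1)^(Suc m)"
proof (induction m)
  case 0
  then show ?case by (simp add: algebra_simps power2_eq_square)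
next
  case (Suc m)
  let ?a = "balC k m" and ?b = "balC k (Suc m)"
  have IH: "?b^2 - ?a * (3 * k * ?b + (1 - k) * ?a) = -8 * (k - 1)^(Suc m)"
    using Suc.IH by simp
  have "(balC k (Suc (Suc m)))^2 - balC k (Suc m) * balC k (Suc (Suc (Suc m)))
      = (k - 1) * (?b^2 - ?a * (3 * k * ?b + (1 - k) * ?a))"
    by (simp add: algebra_simps power2_eq_square)
  also have "\<dots> = -8 * (k - 1)^(Suc (Suc m))" using IH by simp
  finally show ?case .
qed

theorem mainTheorem16:
  fixes k :: int and n :: nat
  assumes "k \<ge> 1" and "n \<ge> 2"
  shows "(balC k n)^2 - balC k (n - 1) * balC k (n + 1) = -8 * (k - 1)^n"
proof -
  obtain m where n: "n = Suc m" using assms(2) by (cases n) auto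
  show ?thesis using cass[of k m] by (simp add: n)
qed

end
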